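(* Let $L$ be a bounded distributive lattice and $f\colon L^n\to L$ an inf-homogeneous and g-comonotone supremal aggregation function. Then $f$ is a Sugeno integral, i.e. $f=\mathsf{Su}_m$ for some $L$-valued capacity $m$ on $[n]$.
   Context: $[n]=\{1,\dots,n\}$. An aggregation function is a monotone $f\colon L^n\to L$ with $f(0,\dots,0)=0$, $f(1,\dots,1)=1$. An $L$-valued capacity is $m\colon2^{[n]}\to L$, monotone, $m(\emptyset)=0$, $m([n])=1$; $\mathsf{Su}_m(\mathbf x)=\bigvee_{I\subseteq[n]}\big(m(I)\wedge\bigwedge_{i\in I}x_i\big)$ (empty meet $=1$). For $c\in L$, $\mathbf c=(c,\dots,c)$; $f$ is inf-homogeneous if $f(\mathbf c\wedge\mathbf x)=c\wedge f(\mathbf x)$ for all $\mathbf x\in L^n,c\in L$. $\mathbf x,\mathbf y$ are g-comonotone if for all $i,j$: $(x_i\vee y_i)\wedge(x_j\vee y_j)=(x_i\wedge x_j)\vee(y_i\wedge y_j)$; $f$ is g-comonotone supremal if $f(\mathbf x\vee\mathbf y)=f(\mathbf x)\vee f(\mathbf y)$ for all g-comonotone $\mathbf x,\mathbf y$. *)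

theory Defs
  imports Main
begin

text \<open>L is a bounded distributive lattice (type class); the index set [n] is a
finite type 'n; vectors in L^n are functions 'n \<Rightarrow> L.\<close>

definition aggregation_function :: "(('n \<Rightarrow> 'a) \<Rightarrow> 'a::{distrib_lattice,bounded_lattice}) \<Rightarrow> bool" where
  "aggregation_function f \<longleftrightarrow> mono f \<and> f (\<lambda>_. bot) = bot \<and> f (\<lambda>_. top) = top"

definition capacity :: "('n set \<Rightarrow> 'a::{distrib_lattice,bounded_lattice}) \<Rightarrow> bool" where
  "capacity m \<longleftrightarrow> mono m \<and> m {} = bot \<and> m UNIV = top"

definition big_meet :: "'a::{distrib_lattice,bounded_lattice} set \<Rightarrow> 'a" where
  "big_meet S = Inf_fin (insert top S)"

definition sugeno :: "('n::finite set \<Rightarrow> 'a::{distrib_lattice,bounded_lattice}) \<Rightarrow> ('n \<Rightarrow> 'a) \<Rightarrow> 'a" where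
  "sugeno m x = Sup_fin ((\<lambda>I. inf (m I) (big_meet (x ` I))) ` (UNIV :: 'n set set))"

definition inf_homogeneous :: "(('n \<Rightarrow> 'a) \<Rightarrow> 'a::{distrib_lattice,bounded_lattice}) \<Rightarrow> bool" where
  "inf_homogeneous f \<longleftrightarrow> (\<forall>x c. f (\<lambda>i. inf c (x i)) = inf c (f x))"

definition g_comonotone :: "('n \<Rightarrow> 'a::{distrib_lattice,bounded_lattice}) \<Rightarrow> ('n \<Rightarrow> 'a) \<Rightarrow> bool" where
  "g_comonotone x y \<longleftrightarrow> (\<forall>i j. inf (sup (x i) (y i)) (sup (x j) (y j)) = sup (inf (x i) (x j)) (inf (y i) (y j)))"

definition g_comonotone_supremal :: "(('n \<Rightarrow> 'a) \<Rightarrow> 'a::{distrib_lattice,bounded_lattice}) \<Rightarrow> bool" where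
  "g_comonotone_supremal f \<longleftrightarrow>
     (\<forall>x y. g_comonotone x y \<longrightarrow> f (\<lambda>i. sup (x i) (y i)) = sup (f x) (f y))"

end

theory Submission
  imports Defs
begin

definition bigsup :: "'a::{distrib_lattice,bounded_lattice} set \<Rightarrow> 'a" where
  "bigsup A = Sup_fin (insert bot A)"

lemma bigsup_le_iff: "finite A \<Longrightarrow> bigsup A \<le> u \<longleftrightarrow> (\<forall>a\<in>A. a \<le> u)"
  unfolding bigsup_def by (simp add: Sup_fin.bounded_iff)

lemma bigsup_ge: "finite A \<Longrightarrow> a \<in> A \<Longrightarrow> a \<le> bigsup A"
  unfolding bigsup_def by (simp add: Sup_fin.coboundedI)

lemma bigsup_empty: "bigsup {} = bot"
  unfolding bigsup_def by simp

lemma bigsup_insert: "finite A \<Longrightarrow> bigsup (insert a A) = sup a (bigsup A)"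
  by (rule order.antisym) (auto simp: bigsup_le_iff bigsup_ge intro: le_supI2)

lemma bigsup_inf: "finite A \<Longrightarrow> inf c (bigsup A) = bigsup ((inf c) ` A)"
  by (induction A rule: finite_induct) (auto simp: bigsup_empty bigsup_insert inf_sup_distrib1)

lemma big_meet_le: "finite S \<Longrightarrow> s \<in> S \<Longrightarrow> big_meet S \<le> s"
  unfolding big_meet_def by (simp add: Inf_fin.coboundedI)

lemma le_big_meet_iff: "finite S \<Longrightarrow> u \<le> big_meet S \<longleftrightarrow> (\<forall>s\<in>S. u \<le> s)"
  unfolding big_meet_def by (simp add: Inf_fin.bounded_iff)

lemma big_meet_union:
  fixes x :: "'n::finite \<Rightarrow> 'a::{distrib_lattice,bounded_lattice}"
  shows "big_meet (x ` (I \<union> J)) = inf (big_meet (x ` I)) (big_meet (x ` J))"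
  by (rule order.antisym) (auto simp: le_big_meet_iff big_meet_le intro: le_infI1 le_infI2)

lemma big_meet_single: "big_meet {a} = a"
  unfolding big_meet_def by simp

theorem corollary1:
  fixes f :: "('n::finite \<Rightarrow> 'a::{distrib_lattice,bounded_lattice}) \<Rightarrow> 'a"
  assumes "aggregation_function f"
    and "inf_homogeneous f"
    and "g_comonotone_supremal f"
  shows "\<exists>m :: 'n set \<Rightarrow> 'a. capacity m \<and> f = sugeno m"
proof -
  have fmono: "mono f" and fbot: "f (\<lambda>_. bot) = bot" and ftop: "f (\<lambda>_. top) = top"
    using assms(1) unfolding aggregation_function_def by auto
  have hom: "\<And>x c. f (\<lambda>i. inf c (x i)) = inf c (f x)"
    using assms(2) unfolding inf_homogeneous_def by auto
  have csup: "\<And>x y. g_comonotone x y \<Longrightarrow> f (\<lambda>i. sup (x i) (y i)) = sup (f x) (f y)"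
    using assms(3) unfolding g_comonotone_supremal_def by auto
  define m :: "'n set \<Rightarrow> 'a" where "m J = f (\<lambda>i. if i \<in> J then top else bot)" for J
  have cap: "capacity m"
    unfolding capacity_def
  proof (intro conjI)
    show "mono m"
    proof (rule monoI)
      fix J K :: "'n set" assume "J \<subseteq> K"
      then have "(\<lambda>i. if i \<in> J then top else bot) \<le> (\<lambda>i. if i \<in> K then top else (bot::'a))"
        by (auto simp: le_fun_def)
      then show "m J \<le> m K" unfolding m_def using fmono by (simp add: monoD)
    qed
    show "m {} = bot" unfolding m_def using fbot by simp
    show "m UNIV = top" unfolding m_def using ftop by simp
  qed
  have "f x = sugeno m x" for x
  proof -
    define c where "c J = big_meet (x ` J)" for J
    define v where "v J = (\<lambda>i. if i \<in> J then c J else bot)" for J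
    have fv: "f (v J) = inf (c J) (m J)" for J
    proof -
      have "v J = (\<lambda>i. inf (c J) (if i \<in> J then top else bot))"
        unfolding v_def by auto
      then show ?thesis unfolding m_def using hom by simp
    qed
    define Z where "Z S = (\<lambda>i. bigsup ((\<lambda>J. v J i) ` S))" for S
    have key: "\<forall>S. card S = k \<longrightarrow> (\<forall>J\<in>S. \<forall>K. J \<subseteq> K \<longrightarrow> K \<in> S) \<longrightarrow>
        f (Z S) = bigsup ((\<lambda>J. inf (c J) (m J)) ` S)" for k
    proof (induction k)
      case 0
      show ?case
      proof (intro allI impI)
        fix S :: "'n set set" assume "card S = 0"
        then have "S = {}" by simp
        then show "f (Z S) = bigsup ((\<lambda>J. inf (c J) (m J)) ` S)"
          unfolding Z_def using fbot by (simp add: bigsup_empty)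
      qed
    next
      case (Suc k)
      show ?case
      proof (intro allI impI)
        fix S :: "'n set set" assume cS: "card S = Suc k"
          and up: "\<forall>J\<in>S. \<forall>K. J \<subseteq> K \<longrightarrow> K \<in> S"
        have "S \<noteq> {}" using cS by auto
        then obtain I where IS: "I \<in> S" and Imin: "\<forall>J\<in>S. J \<le> I \<longrightarrow> I = J"
          using finite_has_minimal[of S] by auto
        define S' where "S' = S - {I}"
        have cS': "card S' = k" unfolding S'_def using cS IS by simp
        have up': "\<forall>J\<in>S'. \<forall>K. J \<subseteq> K \<longrightarrow> K \<in> S'"
          unfolding S'_def using up Imin by blast
        have IH: "f (Z S') = bigsup ((\<lambda>J. inf (c J) (m J)) ` S')"
          using Suc.IH cS' up' by blast
        have Sins: "S = insert I S'" unfolding S'_def using IS by auto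
        have ZS: "Z S = (\<lambda>i. sup (Z S' i) (v I i))"
          unfolding Z_def Sins by (auto simp: bigsup_insert sup_commute)
        have cross: "inf (c I) (Z S' j) \<le> Z S' i" if "i \<in> I" "j \<notin> I" for i j
        proof -
          have "inf (c I) (Z S' j) = bigsup ((inf (c I)) ` ((\<lambda>J. v J j) ` S'))"
            unfolding Z_def by (simp add: bigsup_inf)
          also have "\<dots> \<le> Z S' i"
          proof (subst bigsup_le_iff, simp, intro ballI)
            fix a assume "a \<in> inf (c I) ` (\<lambda>J. v J j) ` S'"
            then obtain J where JS: "J \<in> S'" and a: "a = inf (c I) (v J j)" by auto
            show "a \<le> Z S' i"
            proof (cases "j \<in> J")
              case False then show ?thesis using a by (simp add: v_def)
            next
              case True
              have "I \<union> J \<in> S'" using up' JS by blast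
              moreover have "a = v (I \<union> J) i"
                using a True that unfolding v_def c_def by (simp add: big_meet_union)
              ultimately show ?thesis unfolding Z_def by (auto intro: bigsup_ge)
            qed
          qed
          finally show ?thesis .
        qed
        have com: "g_comonotone (Z S') (v I)"
          unfolding g_comonotone_def
        proof (intro allI)
          fix i j
          show "inf (sup (Z S' i) (v I i)) (sup (Z S' j) (v I j)) =
                sup (inf (Z S' i) (Z S' j)) (inf (v I i) (v I j))"
          proof (cases "i \<in> I"; cases "j \<in> I")
            assume "i \<in> I" "j \<in> I" then show ?thesis
              by (simp add: v_def sup_inf_distrib2)
          next
            assume "i \<notin> I" "j \<notin> I" then show ?thesis by (simp add: v_def)
          next
            assume a: "i \<in> I" "j \<notin> I"
            have "inf (c I) (Z S' j) \<le> Z S' i" using cross a by blast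
            then have le: "inf (c I) (Z S' j) \<le> inf (Z S' i) (Z S' j)" by simp
            have "inf (sup (Z S' i) (c I)) (Z S' j) = sup (inf (Z S' i) (Z S' j)) (inf (c I) (Z S' j))"
              by (rule inf_sup_distrib2)
            also have "\<dots> = inf (Z S' i) (Z S' j)" using le by (rule sup.absorb1)
            finally have "inf (sup (Z S' i) (c I)) (Z S' j) = inf (Z S' i) (Z S' j)" .
            then show ?thesis using a by (simp add: v_def)
          next
            assume a: "i \<notin> I" "j \<in> I"
            have "inf (c I) (Z S' i) \<le> Z S' j" using cross a by blast
            then have le: "inf (Z S' i) (c I) \<le> inf (Z S' i) (Z S' j)" by (simp add: inf_commute)
            have "inf (Z S' i) (sup (Z S' j) (c I)) = sup (inf (Z S' i) (Z S' j)) (inf (Z S' i) (c I))"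
              by (rule inf_sup_distrib1)
            also have "\<dots> = inf (Z S' i) (Z S' j)" using le by (rule sup.absorb1)
            finally have "inf (Z S' i) (sup (Z S' j) (c I)) = inf (Z S' i) (Z S' j)" .
            then show ?thesis using a by (simp add: v_def)
          qed
        qed
        have "f (Z S) = sup (f (Z S')) (f (v I))"
          unfolding ZS using csup[OF com] .
        also have "\<dots> = bigsup ((\<lambda>J. inf (c J) (m J)) ` S)"
          unfolding IH fv Sins by (simp add: bigsup_insert sup_commute)
        finally show "f (Z S) = bigsup ((\<lambda>J. inf (c J) (m J)) ` S)" .
      qed
    qed
    have ZU: "Z UNIV = x"
    proof
      fix i
      show "Z UNIV i = x i"
      proof (rule order.antisym)
        show "Z UNIV i \<le> x i"
          unfolding Z_def by (auto simp: bigsup_le_iff v_def c_def big_meet_le)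
        have "v {i} i = x i" by (simp add: v_def c_def big_meet_single)
        then show "x i \<le> Z UNIV i"
          unfolding Z_def by (intro bigsup_ge) (auto intro: image_eqI[where x="{i}"])
      qed
    qed
    have "f x = bigsup ((\<lambda>J. inf (c J) (m J)) ` UNIV)"
      using key[of "card (UNIV :: 'n set set)"] ZU by auto
    also have "\<dots> = sugeno m x"
      unfolding sugeno_def bigsup_def c_def
      by (subst Sup_fin.insert) (auto simp: inf_commute)
    finally show ?thesis .
  qed
  then show ?thesis using cap by auto
qed

end
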